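(* Let $\mathcal X=\mathcal X_1\times\cdots\times\mathcal X_b$, $\mathcal X_i=\mathbb R^{m_i\times n_i}$ with trace inner product and norms $\|\cdot\|_{(i)}$ (dual $\|\cdot\|_{(i)\star}$), $f$ continuously differentiable with $f\ge f^\star$, $\mathcal D$ a distribution on subsets of $[b]$, and assume constants $L^0_{i,S},L^1_{i,S}\ge0$ exist such that for all $S\in\operatorname{supp}(\mathcal D)$, $X\in\mathcal X$ and $\Gamma$ with $\Gamma_i=0$ for $i\notin S$: $f(X+\Gamma)-f(X)-\langle\nabla f(X),\Gamma\rangle\le\sum_{i\in S}\frac{L^0_{i,S}+L^1_{i,S}\|\nabla_if(X)\|_{(i)\star}}2\|\Gamma_i\|_{(i)}^2$. Let $S\in\operatorname{supp}(\mathcal D)$. Then for any $x_i>0$, $i\in[b]$, and all $X\in\mathcal X$, $$\sum_{i\in S}x_i\|\nabla_if(X)\|_{(i)\star}\le4\max_{i\in S}(x_iL^1_{i,S})\,(f(X)-f^\star)+\sum_{i\in S}\frac{x_iL^0_{i,S}}{L^1_{i,S}}.$$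
   Context: $\operatorname{supp}(\mathcal D)$ is the set of subsets of $[b]$ with positive probability under $\mathcal D$. *)

theory Defs
  imports "HOL-Analysis.Analysis" "HOL-Probability.Probability_Mass_Function"
begin

text \<open>The product space X_1 x ... x X_b is modelled as the Euclidean space real^'n
  whose coordinate set is partitioned into blocks by blk :: 'n => nat; block i
  consists of the coordinates c with blk c = i (the entries of the matrix X_i).
  The sum of trace inner products is then the Euclidean inner product.\<close>

definition block_space :: "('n \<Rightarrow> nat) \<Rightarrow> nat \<Rightarrow> (real^'n) set" where
  "block_space blk i = {v. \<forall>c. blk c \<noteq> i \<longrightarrow> v $ c = 0}"

definition blk_proj :: "('n \<Rightarrow> nat) \<Rightarrow> nat \<Rightarrow> real^'n \<Rightarrow> real^'n" where
  "blk_proj blk i v = (\<chi> c. if blk c = i then v $ c else 0)"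

definition is_norm_on :: "(real^'n) set \<Rightarrow> (real^'n \<Rightarrow> real) \<Rightarrow> bool" where
  "is_norm_on V N \<longleftrightarrow>
     (\<forall>x\<in>V. 0 \<le> N x) \<and> (\<forall>x\<in>V. N x = 0 \<longleftrightarrow> x = 0) \<and>
     (\<forall>x\<in>V. \<forall>a. N (a *\<^sub>R x) = \<bar>a\<bar> * N x) \<and>
     (\<forall>x\<in>V. \<forall>y\<in>V. N (x + y) \<le> N x + N y)"

definition dual_norm_on :: "(real^'n) set \<Rightarrow> (real^'n \<Rightarrow> real) \<Rightarrow> real^'n \<Rightarrow> real" where
  "dual_norm_on V N g = Sup {g \<bullet> v | v. v \<in> V \<and> N v \<le> 1}"

end

theory Submission
  imports Defs
begin

lemma subspace_block: "subspace (block_space blk i)"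
  unfolding subspace_def block_space_def by auto

lemma norm_zero: assumes "is_norm_on V Nf" "0 \<in> V" shows "Nf 0 = 0"
  using assms unfolding is_norm_on_def by auto

lemma norm_sum_le:
  assumes "is_norm_on V Nf" "subspace V" "finite F" "\<forall>c\<in>F. e c \<in> V"
  shows "Nf (\<Sum>c\<in>F. a c *\<^sub>R e c) \<le> (\<Sum>c\<in>F. \<bar>a c\<bar> * Nf (e c))"
  using assms(3,4)
proof (induction F rule: finite_induct)
  case empty
  then show ?case using norm_zero[OF assms(1)] assms(2) by (simp add: subspace_0)
next
  case (insert c F)
  have inV: "(\<Sum>c\<in>F. a c *\<^sub>R e c) \<in> V" using insert assms(2)
    by (simp add: subspace_sum subspace_scale)
  have ec: "a c *\<^sub>R e c \<in> V" using insert assms(2) by (simp add: subspace_scale)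
  have "Nf (\<Sum>c\<in>insert c F. a c *\<^sub>R e c) = Nf (a c *\<^sub>R e c + (\<Sum>c\<in>F. a c *\<^sub>R e c))"
    using insert by simp
  also have "\<dots> \<le> Nf (a c *\<^sub>R e c) + Nf (\<Sum>c\<in>F. a c *\<^sub>R e c)"
    using assms(1) inV ec unfolding is_norm_on_def by blast
  also have "Nf (a c *\<^sub>R e c) = \<bar>a c\<bar> * Nf (e c)"
    using assms(1) insert unfolding is_norm_on_def by blast
  finally show ?case using insert by simp
qed

lemma block_decomp:
  assumes "v \<in> block_space blk i"
  shows "v = (\<Sum>c\<in>{c. blk c = i}. (v $ c) *\<^sub>R axis c (1::real))"
  unfolding vec_eq_iff
proof
  fix k
  have e: "(\<Sum>c\<in>{c. blk c = i}. (v $ c) *\<^sub>R axis c (1::real)) $ k = (\<Sum>c\<in>{c. blk c = i}. if c = k then v $ c else 0)"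
    by (simp add: axis_def if_distrib cong: if_cong)
  show "v $ k = (\<Sum>c\<in>{c. blk c = i}. (v $ c) *\<^sub>R axis c (1::real)) $ k"
    unfolding e using assms by (simp add: block_space_def)
qed

lemma axis_in: "blk c = i \<Longrightarrow> axis c 1 \<in> block_space blk i"
  by (auto simp: block_space_def axis_def)

lemma norm_upper:
  assumes "is_norm_on (block_space blk i) Nf"
  shows "\<exists>K\<ge>0. \<forall>v\<in>block_space blk i. Nf v \<le> K * norm v"
proof -
  let ?V = "block_space blk i" and ?C = "{c. blk c = i}"
  define K where "K = (\<Sum>c\<in>?C. Nf (axis c 1))"
  have Kn: "K \<ge> 0" unfolding K_def using assms axis_in
    by (intro sum_nonneg) (auto simp: is_norm_on_def)
  have "Nf v \<le> K * norm v" if v: "v \<in> ?V" for v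
  proof -
    have "Nf v = Nf (\<Sum>c\<in>?C. (v $ c) *\<^sub>R axis c (1::real))"
      using block_decomp[OF v] by simp
    also have "\<dots> \<le> (\<Sum>c\<in>?C. \<bar>v $ c\<bar> * Nf (axis c 1))"
      by (rule norm_sum_le[OF assms subspace_block]) (auto simp: axis_in)
    also have "\<dots> \<le> (\<Sum>c\<in>?C. norm v * Nf (axis c 1))"
      using assms axis_in
      by (intro sum_mono mult_right_mono component_le_norm_cart) (auto simp: is_norm_on_def)
    finally show ?thesis by (simp add: K_def sum_distrib_left mult.commute)
  qed
  then show ?thesis using Kn by blast
qed

lemma norm_lower:
  assumes "is_norm_on (block_space blk i) Nf"
  shows "\<exists>C\<ge>0. \<forall>v\<in>block_space blk i. norm v \<le> C * Nf v"
proof -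
  let ?V = "block_space blk i"
  obtain K where K: "K \<ge> 0" "\<forall>v\<in>?V. Nf v \<le> K * norm v" using norm_upper[OF assms] by blast
  have sub: "subspace ?V" by (rule subspace_block)
  have neg: "Nf (y - x) = Nf (x - y)" if "x \<in> ?V" "y \<in> ?V" for x y
  proof -
    have "x - y \<in> ?V" using sub that by (simp add: subspace_diff)
    then have "Nf ((-1) *\<^sub>R (x - y)) = \<bar>-1\<bar> * Nf (x - y)" using assms unfolding is_norm_on_def by blast
    moreover have "(-1) *\<^sub>R (x - y) = y - x" by simp
    ultimately show ?thesis by simp
  qed
  have tri: "Nf x \<le> Nf (x - y) + Nf y" if "x \<in> ?V" "y \<in> ?V" for x y
  proof -
    have "x - y \<in> ?V" using sub that by (simp add: subspace_diff)
    then have "Nf ((x - y) + y) \<le> Nf (x - y) + Nf y" using assms that unfolding is_norm_on_def by blast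
    then show ?thesis by simp
  qed
  have lip: "lipschitz_on K ?V Nf"
  proof (rule lipschitz_onI)
    fix x y assume xy: "x \<in> ?V" "y \<in> ?V"
    have d: "x - y \<in> ?V" using sub xy by (simp add: subspace_diff)
    have "Nf x - Nf y \<le> K * norm (x - y)" using tri[OF xy] K(2)[rule_format, OF d] by linarith
    moreover have "Nf y - Nf x \<le> K * norm (x - y)" using tri[OF xy(2,1)] neg[OF xy] K(2)[rule_format, OF d] by linarith
    ultimately show "dist (Nf x) (Nf y) \<le> K * dist x y" by (simp add: dist_norm dist_real_def)
  qed (rule K(1))
  have cont: "continuous_on ?V Nf" by (rule lipschitz_on_continuous_on[OF lip])
  let ?T = "?V \<inter> sphere 0 1"
  have cT: "compact ?T" by (intro closed_Int_compact closed_subspace[OF sub] compact_sphere)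
  show ?thesis
  proof (cases "?T = {}")
    case True
    have "v = 0" if "v \<in> ?V" for v
    proof (rule ccontr)
      assume "v \<noteq> 0"
      then have "(1 / norm v) *\<^sub>R v \<in> ?T" using that sub by (simp add: subspace_scale)
      then show False using True by blast
    qed
    then show ?thesis by (intro exI[of _ 0]) auto
  next
    case False
    obtain w where w: "w \<in> ?T" "\<forall>y\<in>?T. Nf w \<le> Nf y"
      using continuous_attains_inf[OF cT False continuous_on_subset[OF cont]] by blast
    have wV: "w \<in> ?V" and wn: "w \<noteq> 0" using w(1) by auto
    have "Nf w \<ge> 0" "Nf w \<noteq> 0" using assms wV wn unfolding is_norm_on_def by blast+
    then have mpos: "Nf w > 0" by linarith
    have "norm v \<le> (1 / Nf w) * Nf v" if v: "v \<in> ?V" for v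
    proof (cases "v = 0")
      case True then show ?thesis using norm_zero[OF assms] sub by (simp add: subspace_0)
    next
      case False
      then have "(1 / norm v) *\<^sub>R v \<in> ?T" using v sub by (simp add: subspace_scale)
      then have "Nf w \<le> Nf ((1 / norm v) *\<^sub>R v)" using w by blast
      also have "\<dots> = Nf v / norm v" using assms v unfolding is_norm_on_def by auto
      finally have "Nf w * norm v \<le> Nf v" using False by (simp add: field_simps)
      then show ?thesis using mpos by (simp add: field_simps)
    qed
    then show ?thesis using mpos by (intro exI[of _ "1 / Nf w"]) auto
  qed
qed

lemma dual_facts:
  assumes "is_norm_on (block_space blk i) Nf"
  shows "0 \<le> dual_norm_on (block_space blk i) Nf g"
    and "\<And>v. v \<in> block_space blk i \<Longrightarrow> Nf v \<le> 1 \<Longrightarrow> g \<bullet> v \<le> dual_norm_on (block_space blk i) Nf g"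
    and "\<And>e. e > 0 \<Longrightarrow> \<exists>v\<in>block_space blk i. Nf v \<le> 1 \<and> dual_norm_on (block_space blk i) Nf g - e < g \<bullet> v"
proof -
  let ?V = "block_space blk i"
  let ?A = "{g \<bullet> v | v. v \<in> ?V \<and> Nf v \<le> 1}"
  have d: "dual_norm_on ?V Nf g = Sup ?A" by (simp add: dual_norm_on_def)
  have sub: "subspace ?V" by (rule subspace_block)
  have z: "0 \<in> ?V" using sub by (simp add: subspace_0)
  have nz: "Nf 0 = 0" using norm_zero[OF assms z] .
  have zA: "0 \<in> ?A" using z nz by force
  then have ne: "?A \<noteq> {}" by blast
  obtain C where C: "C \<ge> 0" "\<forall>v\<in>?V. norm v \<le> C * Nf v" using norm_lower[OF assms] by blast
  have "a \<le> norm g * C" if aA: "a \<in> ?A" for a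
  proof -
    obtain v where v: "a = g \<bullet> v" "v \<in> ?V" "Nf v \<le> 1" using aA by blast
    have "g \<bullet> v \<le> norm g * norm v" by (rule norm_cauchy_schwarz)
    also have "\<dots> \<le> norm g * (C * Nf v)" using C v by (simp add: mult_left_mono)
    also have "\<dots> \<le> norm g * C" using C v by (intro mult_left_mono) (auto simp: mult_left_le)
    finally show ?thesis using v by simp
  qed
  then have bdd: "bdd_above ?A" by (rule bdd_aboveI)
  show "0 \<le> dual_norm_on ?V Nf g" unfolding d by (rule cSup_upper[OF zA bdd])
  show "\<And>v. v \<in> ?V \<Longrightarrow> Nf v \<le> 1 \<Longrightarrow> g \<bullet> v \<le> dual_norm_on ?V Nf g"
    unfolding d by (rule cSup_upper[OF _ bdd]) blast
  show "\<exists>v\<in>?V. Nf v \<le> 1 \<and> dual_norm_on ?V Nf g - e < g \<bullet> v" if e: "e > 0" for e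
  proof (rule ccontr)
    assume "\<not> ?thesis"
    then have "\<forall>a\<in>?A. a \<le> Sup ?A - e" unfolding d by force
    then have "Sup ?A \<le> Sup ?A - e" by (intro cSup_least[OF ne]) blast
    then show False using e by simp
  qed
qed

lemma term_bd:
  fixes L0 L1 d x M n :: real
  assumes "0 \<le> L0" "0 < L1" "0 \<le> d" "0 < x" "0 < M" "x * L1 \<le> M" "0 \<le> n" "n \<le> x / M"
  shows "(L0 + L1 * d) / 2 * n\<^sup>2 \<le> x * L0 / (2 * M * L1) + x * d / (2 * M)"
proof -
  have q: "x / M \<le> 1 / L1" using assms by (simp add: field_simps)
  have n2: "n\<^sup>2 \<le> (x / M)\<^sup>2" using assms by (intro power_mono) auto
  have "(L0 + L1 * d) / 2 * n\<^sup>2 \<le> (L0 + L1 * d) / 2 * (x / M)\<^sup>2"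
    using n2 assms by (intro mult_left_mono) auto
  also have "\<dots> = (x / M) * ((x / M) * L0) / 2 + (x / M) * ((x * L1) / M) * d / 2"
    by (simp add: power2_eq_square field_simps) (rule add_divide_distrib)
  also have "\<dots> \<le> (x / M) * ((1 / L1) * L0) / 2 + (x / M) * (M / M) * d / 2"
  proof -
    have a: "(x / M) * L0 \<le> (1 / L1) * L0" using q assms by (intro mult_right_mono) auto
    have b: "(x * L1) / M \<le> M / M" using assms by (intro divide_right_mono) auto
    have "(x / M) * ((x / M) * L0) \<le> (x / M) * ((1 / L1) * L0)" using a assms by (intro mult_left_mono) auto
    moreover have "(x / M) * ((x * L1) / M) * d \<le> (x / M) * (M / M) * d"
      using b assms by (intro mult_right_mono mult_left_mono) auto
    ultimately show ?thesis by (intro add_mono divide_right_mono) auto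
  qed
  also have "\<dots> = x * L0 / (2 * M * L1) + x * d / (2 * M)" using assms by (simp add: field_simps)
  finally show ?thesis .
qed

theorem lemma12:
  fixes f :: "real^'n \<Rightarrow> real" and grad :: "real^'n \<Rightarrow> real^'n"
    and blk :: "'n \<Rightarrow> nat" and b :: nat
    and N :: "nat \<Rightarrow> real^'n \<Rightarrow> real"
    and fstar :: real and D :: "nat set pmf"
    and L0 L1 :: "nat \<Rightarrow> nat set \<Rightarrow> real"
    and S :: "nat set" and x :: "nat \<Rightarrow> real" and X :: "real^'n"
  assumes blk_range: "\<forall>c. blk c < b"
    and norms: "\<forall>i<b. is_norm_on (block_space blk i) (N i)"
    and deriv: "\<forall>Y. (f has_derivative (\<lambda>h. grad Y \<bullet> h)) (at Y)"
    and grad_cont: "continuous_on UNIV grad"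
    and lower: "\<forall>Y. fstar \<le> f Y"
    and D_sub: "set_pmf D \<subseteq> Pow {..<b}"
    and L_nonneg: "\<forall>i T. 0 \<le> L0 i T \<and> 0 \<le> L1 i T"
    and smooth: "\<forall>T\<in>set_pmf D. \<forall>Y \<Gamma>. (\<forall>c. blk c \<notin> T \<longrightarrow> \<Gamma> $ c = 0) \<longrightarrow>
        f (Y + \<Gamma>) - f Y - grad Y \<bullet> \<Gamma>
          \<le> (\<Sum>i\<in>T. (L0 i T + L1 i T *
                 dual_norm_on (block_space blk i) (N i) (blk_proj blk i (grad Y))) / 2
               * (N i (blk_proj blk i \<Gamma>))\<^sup>2)"
    and L1_pos: "\<forall>i\<in>S. 0 < L1 i S"
    and S_supp: "S \<in> set_pmf D"
    and x_pos: "\<forall>i<b. 0 < x i"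
  shows "(\<Sum>i\<in>S. x i * dual_norm_on (block_space blk i) (N i) (blk_proj blk i (grad X)))
     \<le> 4 * Max (insert 0 ((\<lambda>i. x i * L1 i S) ` S)) * (f X - fstar)
       + (\<Sum>i\<in>S. x i * L0 i S / L1 i S)"
proof -
  have Ssub: "S \<subseteq> {..<b}" using D_sub S_supp by blast
  have finS: "finite S" using Ssub finite_subset by blast
  define d where "d i = dual_norm_on (block_space blk i) (N i) (blk_proj blk i (grad X))" for i
  define M where "M = Max (insert 0 ((\<lambda>i. x i * L1 i S) ` S))"
  have nrm: "\<And>i. i \<in> S \<Longrightarrow> is_norm_on (block_space blk i) (N i)" using norms Ssub by blast
  have xp: "\<And>i. i \<in> S \<Longrightarrow> 0 < x i" using x_pos Ssub by blast
  have fl: "fstar \<le> f X" using lower by blast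
  show ?thesis
  proof (cases "S = {}")
    case True
    then show ?thesis by (simp add: M_def)
  next
    case False
    have Mge: "x i * L1 i S \<le> M" if "i \<in> S" for i
      unfolding M_def using finS that by (intro Max_ge) auto
    obtain i0 where i0: "i0 \<in> S" using False by blast
    have Mpos: "0 < M" using Mge[OF i0] xp[OF i0] L1_pos i0 by (smt (verit) mult_pos_pos)
    have dnn: "\<And>i. i \<in> S \<Longrightarrow> 0 \<le> d i" unfolding d_def using dual_facts(1)[OF nrm] by blast
    define sx where "sx = (\<Sum>i\<in>S. x i)"
    have sxp: "0 < sx" unfolding sx_def using finS False xp by (intro sum_pos) auto
    have key: "(\<Sum>i\<in>S. x i * d i) \<le> 2 * M * (f X - fstar) + (\<Sum>i\<in>S. x i * L0 i S / L1 i S) + e"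
      if e: "e > 0" for e
    proof -
      define eps where "eps = e / (2 * sx)"
      have epsp: "eps > 0" using e sxp by (simp add: eps_def)
      have "\<forall>i\<in>S. \<exists>v. v \<in> block_space blk i \<and> N i v \<le> 1 \<and> d i - eps < blk_proj blk i (grad X) \<bullet> v"
        using dual_facts(3)[OF nrm epsp] unfolding d_def by blast
      then obtain u where u: "\<And>i. i \<in> S \<Longrightarrow> u i \<in> block_space blk i \<and> N i (u i) \<le> 1 \<and> d i - eps < blk_proj blk i (grad X) \<bullet> u i"
        by metis
      have ip: "blk_proj blk i (grad X) \<bullet> u i = grad X \<bullet> u i" if i: "i \<in> S" for i
      proof -
        have uz: "\<And>c. blk c \<noteq> i \<Longrightarrow> u i $ c = 0" using u[OF i] by (simp add: block_space_def)
        show ?thesis unfolding inner_vec_def blk_proj_def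
          by (intro sum.cong) (auto simp: uz)
      qed
      define \<Gamma> where "\<Gamma> = (\<Sum>j\<in>S. (- (x j / M)) *\<^sub>R u j)"
      have P1: "\<forall>c. blk c \<notin> S \<longrightarrow> \<Gamma> $ c = 0"
      proof (intro allI impI)
        fix c assume c: "blk c \<notin> S"
        have "u j $ c = 0" if j: "j \<in> S" for j
        proof -
          have "blk c \<noteq> j" using c j by blast
          then show ?thesis using u[OF j] by (simp add: block_space_def)
        qed
        then show "\<Gamma> $ c = 0" unfolding \<Gamma>_def by (simp add: sum.neutral)
      qed
      have P2: "blk_proj blk j \<Gamma> = (- (x j / M)) *\<^sub>R u j" if j: "j \<in> S" for j
      proof -
        have "(if blk c = j then \<Gamma> $ c else 0) = - (x j / M) * u j $ c" for c
        proof (cases "blk c = j")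
          case True
          have "\<Gamma> $ c = (\<Sum>k\<in>S. - (x k / M) * u k $ c)" unfolding \<Gamma>_def by simp
          also have "\<dots> = (\<Sum>k\<in>S. if k = j then - (x j / M) * u j $ c else 0)"
          proof (intro sum.cong refl)
            fix k assume k: "k \<in> S"
            show "- (x k / M) * u k $ c = (if k = j then - (x j / M) * u j $ c else 0)"
              using u[OF k] True by (auto simp: block_space_def)
          qed
          also have "\<dots> = - (x j / M) * u j $ c" using finS j by simp
          finally show ?thesis using True by simp
        next
          case False
          then show ?thesis using u[OF j] by (simp add: block_space_def)
        qed
        then show ?thesis by (simp add: blk_proj_def vec_eq_iff)
      qed
      have P3: "grad X \<bullet> \<Gamma> = (\<Sum>j\<in>S. - (x j / M) * (grad X \<bullet> u j))"
        unfolding \<Gamma>_def by (simp add: inner_sum_right)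
      have sm: "f (X + \<Gamma>) - f X - grad X \<bullet> \<Gamma> \<le> (\<Sum>i\<in>S. (L0 i S + L1 i S * d i) / 2 * (N i (blk_proj blk i \<Gamma>))\<^sup>2)"
        using smooth S_supp P1 unfolding d_def by blast
      define t where "t j = - (x j / M) * (d j - eps) + (x j * L0 j S / (2 * M * L1 j S) + x j * d j / (2 * M))" for j
      have tb: "- (x j / M) * (grad X \<bullet> u j) + (L0 j S + L1 j S * d j) / 2 * (N j (blk_proj blk j \<Gamma>))\<^sup>2 \<le> t j"
        if j: "j \<in> S" for j
      proof -
        have "N j ((- (x j / M)) *\<^sub>R u j) = \<bar>- (x j / M)\<bar> * N j (u j)"
          using nrm[OF j] u[OF j] unfolding is_norm_on_def by blast
        then have Nj: "N j (blk_proj blk j \<Gamma>) = (x j / M) * N j (u j)"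
          using P2[OF j] xp[OF j] Mpos by simp
        have N0: "0 \<le> N j (u j)" using nrm[OF j] u[OF j] unfolding is_norm_on_def by blast
        have n1: "0 \<le> N j (blk_proj blk j \<Gamma>)" using Nj N0 xp[OF j] Mpos by simp
        have "(x j / M) * N j (u j) \<le> (x j / M) * 1" using u[OF j] xp[OF j] Mpos
          by (intro mult_left_mono) auto
        then have n2: "N j (blk_proj blk j \<Gamma>) \<le> x j / M" using Nj by simp
        have a: "(L0 j S + L1 j S * d j) / 2 * (N j (blk_proj blk j \<Gamma>))\<^sup>2 \<le> x j * L0 j S / (2 * M * L1 j S) + x j * d j / (2 * M)"
          using L_nonneg L1_pos j dnn[OF j] xp[OF j] Mpos Mge[OF j] n1 n2 by (intro term_bd) auto
        have b: "- (x j / M) * (grad X \<bullet> u j) \<le> - (x j / M) * (d j - eps)"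
          using u[OF j] ip[OF j] xp[OF j] Mpos by (intro mult_left_mono_neg) auto
        show ?thesis using a b unfolding t_def by linarith
      qed
      have "fstar - f X \<le> f (X + \<Gamma>) - f X" using lower by auto
      also have "\<dots> \<le> (\<Sum>j\<in>S. - (x j / M) * (grad X \<bullet> u j)) + (\<Sum>i\<in>S. (L0 i S + L1 i S * d i) / 2 * (N i (blk_proj blk i \<Gamma>))\<^sup>2)"
        using sm P3 by linarith
      also have "\<dots> \<le> (\<Sum>j\<in>S. t j)" unfolding sum.distrib[symmetric] by (rule sum_mono) (rule tb)
      finally have A: "fstar - f X \<le> (\<Sum>j\<in>S. t j)" .
      have tj: "2 * M * t j = - (x j * d j) + 2 * eps * x j + x j * L0 j S / L1 j S" for j
        unfolding t_def using Mpos by (simp add: field_simps)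
      have "2 * M * (\<Sum>j\<in>S. t j) = (\<Sum>j\<in>S. - (x j * d j) + 2 * eps * x j + x j * L0 j S / L1 j S)"
        by (simp add: sum_distrib_left tj)
      also have "\<dots> = - (\<Sum>j\<in>S. x j * d j) + 2 * eps * sx + (\<Sum>j\<in>S. x j * L0 j S / L1 j S)"
        by (simp add: sum.distrib sum_negf sum_distrib_left sx_def sum_subtractf)
      also have "2 * eps * sx = e" using sxp by (simp add: eps_def)
      finally have B: "2 * M * (\<Sum>j\<in>S. t j) = - (\<Sum>j\<in>S. x j * d j) + e + (\<Sum>j\<in>S. x j * L0 j S / L1 j S)" .
      have "2 * M * (fstar - f X) \<le> 2 * M * (\<Sum>j\<in>S. t j)" using A Mpos by simp
      then show ?thesis using B by (simp add: algebra_simps)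
    qed
    have "(\<Sum>i\<in>S. x i * d i) \<le> 2 * M * (f X - fstar) + (\<Sum>i\<in>S. x i * L0 i S / L1 i S)"
      by (rule field_le_epsilon) (use key in auto)
    also have "\<dots> \<le> 4 * M * (f X - fstar) + (\<Sum>i\<in>S. x i * L0 i S / L1 i S)"
      using Mpos fl by (simp add: mult_right_mono)
    finally show ?thesis by (simp add: d_def M_def)
  qed
qed

end
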